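(* With the notation of the context, let $\bm c\in\mathbb{R}^e$ and let $\bm p=(\rho,\sigma,t_\rho,t_\sigma)$ be a profile. There exists a sequence compatible with $\bm p$ that satisfies the equality constraints for $\bm c$ if and only if there are vectors $\bm a,\bm d_c,\bm d_\infty\in\mathbb{R}^d$ with $\bm d_c\neq\bm 0$ such that, for all $i\in\{1,\dots,n\}$ and $j\in\{1,\dots,m\}$: (1) $\bm r_i^\top\bm a=\rho(i)$ and $\bm r_i^\top\bm d_\infty=0$ whenever $t_\rho(i)\in\{-1,1\}$; $\bm s_i^\top\bm a=\sigma(i)$ and $\bm s_i^\top\bm d_\infty=0$ whenever $t_\sigma(i)\in\{-1,1\}$; (2) $\bm r_i^\top\bm a=\rho(i)$, $\bm r_i^\top\bm d_c=0$, $\bm r_i^\top\bm d_\infty=0$ whenever $t_\rho(i)=0$; $\bm s_i^\top\bm a=\sigma(i)$, $\bm s_i^\top\bm d_c=0$, $\bm s_i^\top\bm d_\infty=0$ whenever $t_\sigma(i)=0$; (3) $\bm r_i^\top\bm d_c>0$ (resp. $<0$) whenever $t_\rho(i)=1$ (resp. $-1$); $\bm s_i^\top\bm d_c>0$ (resp. $<0$) whenever $t_\sigma(i)=1$ (resp. $-1$); (4) $\bm r_i^\top\bm d_\infty>0$ (resp. $<0$) whenever $t_\rho(i)=\omega$ (resp. $-\omega$); $\bm s_i^\top\bm d_\infty>0$ (resp. $<0$) whenever $t_\sigma(i)=\omega$ (resp. $-\omega$); (5) $\bm u_j^\top\bm d_c=\bm u_j^\top\bm d_\infty=0$, $\bm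 v_j^\top\bm d_c=\bm v_j^\top\bm d_\infty=0$, and $(\bm u_j-\bm v_j)^\top\bm a=\bm w_j^\top\bm c+d_j$.
   Context: Fixed data: $\bm r_i,\bm s_i\in\mathbb{Q}^d$, $\bm t_i\in\mathbb{Q}^e$, $h_i\in\mathbb{Q}$ for $i\in[1,n]$ and $\bm u_j,\bm v_j\in\mathbb{Q}^d$, $\bm w_j\in\mathbb{Q}^e$, $d_j\in\mathbb{Q}$ for $j\in[1,m]$. A profile is a tuple $\bm p=(\rho,\sigma,t_\rho,t_\sigma)$ of functions $\rho,\sigma\colon\{1,\dots,n\}\to\mathbb{R}\cup\{-\omega,\omega\}$ and $t_\rho,t_\sigma\colon\{1,\dots,n\}\to\{-\omega,-1,0,1,\omega\}$. For a sequence $(\bm a_k)_{k\ge1}$ in $\mathbb{R}^d$ let $\bm\rho_i=(\bm r_i^\top\bm a_k)_{k\ge1}$ and $\bm\sigma_i=(\bm s_i^\top\bm a_k)_{k\ge1}$. A sequence of pairwise distinct vectors is compatible with $\bm p$ if for every $i$ the following hold for $\bm\rho_i$ w.r.t. $(\rho(i),t_\rho(i))$ and for $\bm\sigma_i$ w.r.t. $(\sigma(i),t_\sigma(i))$: type $0$: constantly equal to the value; type $1$ (resp. $-1$): strictly increasing (resp. strictly decreasing) converging from below (resp. above) to the real value; type $\omega$ (resp. $-\omega$): strictly increasing diverging to $\infty$ (resp. strictly decreasing diverging to $-\infty$), with value $\omega$ (resp. $-\omega$). A sequence $(\bm a_k)$ satisfies the equality constraints for $\bm c$ if $\bm u_j^\top\bm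 a_k=\bm v_j^\top\bm a_\ell+\bm w_j^\top\bm c+d_j$ for all $j$ and all $k<\ell$.
   Formalization: Each profile satisfies $\rho(i)=\omega$ (resp. $-\omega$) whenever $t_\rho(i)=\omega$ (resp. $-\omega$) and $\rho(i)\in\mathbb{R}$ whenever $t_\rho(i)\in\{-1,0,1\}$, likewise for $\sigma$ and $t_\sigma$. Apart from conventions, each condition added here is assumed in the paper as well or is needed for the statement above to hold. *)

theory Defs
  imports "HOL-Analysis.Analysis" "HOL-Library.Extended_Real"
begin

datatype ptype = NegOmega | NegOne | Zero | One | Omega

definition seq_compat :: "(nat \<Rightarrow> real) \<Rightarrow> ereal \<Rightarrow> ptype \<Rightarrow> bool" where
  "seq_compat x v t =
    (case t of
       Zero \<Rightarrow> (\<forall>k. ereal (x k) = v)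
     | One \<Rightarrow> (\<exists>r. v = ereal r \<and> (\<forall>k l. k < l \<longrightarrow> x k < x l) \<and> x \<longlonglongrightarrow> r)
     | NegOne \<Rightarrow> (\<exists>r. v = ereal r \<and> (\<forall>k l. k < l \<longrightarrow> x l < x k) \<and> x \<longlonglongrightarrow> r)
     | Omega \<Rightarrow> v = PInfty \<and> (\<forall>k l. k < l \<longrightarrow> x k < x l) \<and> filterlim x at_top sequentially
     | NegOmega \<Rightarrow> v = MInfty \<and> (\<forall>k l. k < l \<longrightarrow> x l < x k) \<and> filterlim x at_bot sequentially)"

definition wf_entry :: "ereal \<Rightarrow> ptype \<Rightarrow> bool" where
  "wf_entry v t =
    (case t of
       Omega \<Rightarrow> v = PInfty
     | NegOmega \<Rightarrow> v = MInfty
     | _ \<Rightarrow> (\<exists>r. v = ereal r))"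

text \<open>A sequence (indexed from 0 instead of 1) of pairwise distinct vectors
  compatible with the profile (rho, sig, trho, tsig) for data r_i, s_i, i in 1..n.\<close>
definition compatible ::
  "nat \<Rightarrow> (nat \<Rightarrow> real^'d) \<Rightarrow> (nat \<Rightarrow> real^'d) \<Rightarrow>
   (nat \<Rightarrow> ereal) \<Rightarrow> (nat \<Rightarrow> ereal) \<Rightarrow> (nat \<Rightarrow> ptype) \<Rightarrow> (nat \<Rightarrow> ptype) \<Rightarrow>
   (nat \<Rightarrow> real^'d) \<Rightarrow> bool" where
  "compatible n r s rho sig trho tsig a =
    (inj a \<and>
     (\<forall>i\<in>{1..n}. seq_compat (\<lambda>k. r i \<bullet> a k) (rho i) (trho i)
                \<and> seq_compat (\<lambda>k. s i \<bullet> a k) (sig i) (tsig i)))"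

definition eq_constraints ::
  "nat \<Rightarrow> (nat \<Rightarrow> real^'d) \<Rightarrow> (nat \<Rightarrow> real^'d) \<Rightarrow> (nat \<Rightarrow> real^'e) \<Rightarrow> (nat \<Rightarrow> real) \<Rightarrow>
   real^'e \<Rightarrow> (nat \<Rightarrow> real^'d) \<Rightarrow> bool" where
  "eq_constraints m u v w dd c a =
    (\<forall>j\<in>{1..m}. \<forall>k l. k < l \<longrightarrow> u j \<bullet> a k = v j \<bullet> a l + w j \<bullet> c + dd j)"

definition rat_vec :: "real^'d \<Rightarrow> bool" where
  "rat_vec x = (\<forall>k. x $ k \<in> \<rat>)"

end

theory Submission
  imports Defs
begin


lemma solve_limit:
  fixes L :: "(real^'d) set" and q :: "'a \<Rightarrow> real^'d"
  assumes L: "subspace L" and J: "finite J" and xL: "\<And>k. x k \<in> L"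
    and lim: "\<And>i. i \<in> J \<Longrightarrow> (\<lambda>k. q i \<bullet> x k) \<longlonglongrightarrow> \<gamma> i"
  shows "\<exists>z\<in>L. \<forall>i\<in>J. q i \<bullet> z = \<gamma> i"
proof -
  define G where "G = (\<lambda>y::real^'d. \<Sum>i\<in>J. (q i \<bullet> y) *\<^sub>R q i)"
  have linG: "linear G" unfolding G_def
    by (auto simp: linear_iff inner_add_right scaleR_add_left sum.distrib scaleR_sum_right)
  have "subspace (G ` L)" using linG L by (rule linear_subspace_image)
  hence cl: "closed (G ` L)" by (rule closed_subspace)
  have "(\<lambda>k. G (x k)) \<longlonglongrightarrow> (\<Sum>i\<in>J. \<gamma> i *\<^sub>R q i)"
    unfolding G_def by (intro tendsto_sum tendsto_scaleR lim tendsto_const)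
  hence "(\<Sum>i\<in>J. \<gamma> i *\<^sub>R q i) \<in> G ` L"
    using closed_sequentially[OF cl, of "\<lambda>k. G (x k)"] xL by blast
  then obtain z where zL: "z \<in> L" and Gz: "G z = (\<Sum>i\<in>J. \<gamma> i *\<^sub>R q i)" by (metis imageE)
  define e where "e i = \<gamma> i - q i \<bullet> z" for i
  have e0: "(\<Sum>i\<in>J. e i *\<^sub>R q i) = 0"
    using Gz unfolding G_def e_def by (simp add: scaleR_diff_left sum_subtractf)
  have "\<And>k. (\<Sum>i\<in>J. e i * (q i \<bullet> x k)) = 0"
  proof -
    fix k
    have "(\<Sum>i\<in>J. e i * (q i \<bullet> x k)) = (\<Sum>i\<in>J. e i *\<^sub>R q i) \<bullet> x k"
      by (simp add: inner_sum_left)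
    thus "(\<Sum>i\<in>J. e i * (q i \<bullet> x k)) = 0" using e0 by simp
  qed
  moreover have "(\<lambda>k. \<Sum>i\<in>J. e i * (q i \<bullet> x k)) \<longlonglongrightarrow> (\<Sum>i\<in>J. e i * \<gamma> i)"
    by (intro tendsto_sum tendsto_mult lim tendsto_const)
  ultimately have "(\<lambda>k. 0::real) \<longlonglongrightarrow> (\<Sum>i\<in>J. e i * \<gamma> i)" by simp
  hence s1: "(\<Sum>i\<in>J. e i * \<gamma> i) = 0" by (simp add: LIMSEQ_const_iff)
  have s2: "(\<Sum>i\<in>J. e i * (q i \<bullet> z)) = 0"
  proof -
    have "(\<Sum>i\<in>J. e i * (q i \<bullet> z)) = (\<Sum>i\<in>J. e i *\<^sub>R q i) \<bullet> z"
      by (simp add: inner_sum_left)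
    thus ?thesis using e0 by simp
  qed
  have "(\<Sum>i\<in>J. e i * e i) = 0"
    using s1 s2 unfolding e_def by (simp add: right_diff_distrib sum_subtractf)
  hence "\<forall>i\<in>J. e i * e i = 0" using J by (subst (asm) sum_nonneg_eq_0_iff) auto
  thus ?thesis using zL unfolding e_def by auto
qed

lemma solve_dir:
  fixes L :: "(real^'d) set" and q p :: "'a \<Rightarrow> real^'d"
  assumes L: "subspace L" and J: "finite J" and Om: "finite Om" and xL: "\<And>k. x k \<in> L"
    and lim: "\<And>i. i \<in> J \<Longrightarrow> (\<lambda>k. q i \<bullet> x k) \<longlonglongrightarrow> \<gamma> i"
    and inf: "\<And>i. i \<in> Om \<Longrightarrow> filterlim (\<lambda>k. p i \<bullet> x k) at_top sequentially"
  shows "\<exists>y\<in>L. (\<forall>i\<in>J. q i \<bullet> y = 0) \<and> (\<forall>i\<in>Om. p i \<bullet> y > 0)"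
proof -
  obtain z where zL: "z \<in> L" and zq: "\<forall>i\<in>J. q i \<bullet> z = \<gamma> i"
    using solve_limit[of L J x q \<gamma>] L J xL lim by blast
  define x' where "x' k = x k - z" for k
  have x'L: "x' k \<in> L" for k unfolding x'_def using xL zL L by (simp add: subspace_diff)
  have lim0: "(\<lambda>k. q i \<bullet> x' k) \<longlonglongrightarrow> 0" if "i \<in> J" for i
  proof -
    have "(\<lambda>k. q i \<bullet> x k - q i \<bullet> z) \<longlonglongrightarrow> \<gamma> i - \<gamma> i"
      using that zq by (intro tendsto_diff lim tendsto_const) auto
    thus ?thesis unfolding x'_def by (simp add: inner_diff_right)
  qed
  have inf': "filterlim (\<lambda>k. p i \<bullet> x' k) at_top sequentially" if "i \<in> Om" for i
  proof -
    have "filterlim (\<lambda>k. (- (p i \<bullet> z)) + p i \<bullet> x k) at_top sequentially"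
      by (rule filterlim_tendsto_add_at_top[OF tendsto_const inf[OF that]])
    thus ?thesis unfolding x'_def by (simp add: inner_diff_right)
  qed
  define V where "V = {y\<in>L. \<forall>i\<in>J. q i \<bullet> y = 0}"
  have V: "subspace V" unfolding V_def using L
    by (auto simp: subspace_def inner_add_right)
  define U where "U = {w\<in>L. \<forall>v\<in>V. orthogonal w v}"
  have U: "subspace U" unfolding U_def using L
    by (auto simp: subspace_def orthogonal_def inner_add_left)
  define G where "G = (\<lambda>y::real^'d. \<Sum>i\<in>J. (q i \<bullet> y) *\<^sub>R q i)"
  have linG: "linear G" unfolding G_def
    by (auto simp: linear_iff inner_add_right scaleR_add_left sum.distrib scaleR_sum_right)
  have GV: "G y = 0" if "y \<in> V" for y using that unfolding V_def G_def by simp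
  have Gsq: "y \<bullet> G y = (\<Sum>i\<in>J. (q i \<bullet> y) * (q i \<bullet> y))" for y
    unfolding G_def by (simp add: inner_sum_right inner_commute)
  have injU: "\<forall>w\<in>U. G w = 0 \<longrightarrow> w = 0"
  proof (intro ballI impI)
    fix w assume wU: "w \<in> U" and Gw: "G w = 0"
    have "(\<Sum>i\<in>J. (q i \<bullet> w) * (q i \<bullet> w)) = 0" using Gsq[of w] Gw by simp
    hence "\<forall>i\<in>J. (q i \<bullet> w) * (q i \<bullet> w) = 0" using J by (subst (asm) sum_nonneg_eq_0_iff) auto
    hence "w \<in> V" using wU unfolding V_def U_def by auto
    hence "orthogonal w w" using wU unfolding U_def by auto
    thus "w = 0" by (simp add: orthogonal_def)
  qed
  obtain eps where eps: "eps > 0" and iso: "\<forall>w\<in>U. norm (G w) \<ge> eps * norm w"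
    using injective_imp_isometric[OF closed_subspace[OF U] U linear_conv_bounded_linear[THEN iffD1, OF linG] injU]
    by blast
  have "\<exists>y w. y \<in> V \<and> w \<in> U \<and> x' k = y + w" for k
  proof -
    obtain y w where y: "y \<in> span V" and w: "\<And>v. v \<in> span V \<Longrightarrow> orthogonal w v"
      and xe: "x' k = y + w"
      using orthogonal_subspace_decomp_exists[of V "x' k"] by blast
    have yV: "y \<in> V" using y V by (metis span_eq_iff)
    have "y \<in> L" using yV unfolding V_def by auto
    hence "w \<in> L" using x'L[of k] xe L
      by (metis add_diff_cancel_left' subspace_diff)
    hence "w \<in> U" unfolding U_def using w span_superset by blast
    thus ?thesis using yV xe by blast
  qed
  then obtain y w where yV: "\<And>k. y k \<in> V" and wU: "\<And>k. w k \<in> U" and xe: "\<And>k. x' k = y k + w k"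
    by metis
  have Gw: "G (w k) = G (x' k)" for k
    using xe[of k] GV[OF yV[of k]] linear_add[OF linG] by simp
  have "(\<lambda>k. G (x' k)) \<longlonglongrightarrow> (\<Sum>i\<in>J. 0 *\<^sub>R q i)"
    unfolding G_def by (intro tendsto_sum tendsto_scaleR lim0 tendsto_const)
  hence "(\<lambda>k. G (w k)) \<longlonglongrightarrow> 0" using Gw by simp
  hence glim: "(\<lambda>k. norm (G (w k)) / eps) \<longlonglongrightarrow> 0"
    using tendsto_divide_zero tendsto_norm_zero by blast
  have wle: "norm (w k) \<le> norm (G (w k)) / eps" for k
  proof -
    have "eps * norm (w k) \<le> norm (G (w k))" using iso wU[of k] by blast
    thus ?thesis by (subst pos_le_divide_eq[OF eps]) (simp add: mult.commute)
  qed
  have w0: "w \<longlonglongrightarrow> 0"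
  proof (rule Lim_null_comparison[OF _ glim])
    show "\<forall>\<^sub>F k in sequentially. norm (w k) \<le> norm (G (w k)) / eps"
      using wle by (simp add: always_eventually)
  qed
  have ev: "eventually (\<lambda>k. p i \<bullet> y k > 0) sequentially" if "i \<in> Om" for i
  proof -
    have "(\<lambda>k. - (p i \<bullet> w k)) \<longlonglongrightarrow> - (p i \<bullet> 0)"
      by (intro tendsto_minus tendsto_inner tendsto_const w0)
    hence "filterlim (\<lambda>k. - (p i \<bullet> w k) + p i \<bullet> x' k) at_top sequentially"
      by (rule filterlim_tendsto_add_at_top[OF _ inf'[OF that]])
    moreover have "- (p i \<bullet> w k) + p i \<bullet> x' k = p i \<bullet> y k" for k
      using xe[of k] by (simp add: inner_add_right)
    ultimately have "filterlim (\<lambda>k. p i \<bullet> y k) at_top sequentially" by simp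
    thus ?thesis by (simp add: filterlim_at_top_dense)
  qed
  have "eventually (\<lambda>k. \<forall>i\<in>Om. p i \<bullet> y k > 0) sequentially"
    using Om ev by (intro eventually_ball_finite) auto
  then obtain N where "\<forall>i\<in>Om. p i \<bullet> y N > 0" by (auto simp: eventually_sequentially)
  moreover have "y N \<in> L" "\<forall>i\<in>J. q i \<bullet> y N = 0" using yV[of N] unfolding V_def by auto
  ultimately show ?thesis by blast
qed



definition epsq :: "nat \<Rightarrow> real" where "epsq k = inverse (real (Suc k))"

lemma epsq_facts: "0 < epsq k" "epsq k \<le> 1" "k < l \<Longrightarrow> epsq l < epsq k"
  unfolding epsq_def by (auto simp: field_simps)

lemma epsq_lim: "epsq \<longlonglongrightarrow> 0"
  unfolding epsq_def by (rule LIMSEQ_inverse_real_of_nat)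

lemma key_ineq:
  fixes b d t c :: real
  assumes "0 < d" "d \<le> 1" "1 \<le> t" "c > \<bar>b\<bar>"
  shows "b * d + t * c > 0"
proof -
  have "\<bar>b * d\<bar> \<le> \<bar>b\<bar>" using assms by (simp add: abs_mult mult_left_le)
  hence "b * d \<ge> - \<bar>b\<bar>" by linarith
  moreover have "t * c \<ge> c" using assms by (simp add: mult_right_mono [of 1 t c, simplified])
  ultimately show ?thesis using assms by linarith
qed

lemma omega_seq:
  fixes qa qc qd M :: real
  assumes qd: "qd > 0" and hM: "M * qd > \<bar>qc\<bar>"
  defines "f \<equiv> (\<lambda>k. qa - epsq k * qc + real k * M * qd)"
  shows "\<forall>k l. k < l \<longrightarrow> f k < f l" "filterlim f at_top sequentially"
proof -
  show "\<forall>k l. k < l \<longrightarrow> f k < f l"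
  proof (intro allI impI)
    fix k l :: nat assume kl: "k < l"
    have "f l - f k = qc * (epsq k - epsq l) + (real l - real k) * (M * qd)"
      unfolding f_def by (simp add: algebra_simps)
    moreover have "qc * (epsq k - epsq l) + (real l - real k) * (M * qd) > 0"
      apply (rule key_ineq)
      using epsq_facts[of k] epsq_facts[of l] epsq_facts(3)[OF kl] kl hM by auto
    ultimately show "f k < f l" by linarith
  qed
  have lim1: "filterlim (\<lambda>k. (qa - \<bar>qc\<bar>) + (M * qd) * real k) at_top sequentially"
  proof (rule filterlim_tendsto_add_at_top[OF tendsto_const])
    have "M * qd > 0" using hM by linarith
    thus "filterlim (\<lambda>k. (M * qd) * real k) at_top sequentially"
      by (intro filterlim_tendsto_pos_mult_at_top[OF tendsto_const] filterlim_real_sequentially)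
  qed
  have le: "(qa - \<bar>qc\<bar>) + (M * qd) * real k \<le> f k" for k
  proof -
    have "\<bar>epsq k * qc\<bar> \<le> \<bar>qc\<bar>" using epsq_facts[of k] by (simp add: abs_mult mult_left_le_one_le)
    thus ?thesis unfolding f_def by (simp add: algebra_simps)
  qed
  show "filterlim f at_top sequentially"
    apply (rule filterlim_at_top_mono[OF lim1])
    using le by (simp add: always_eventually)
qed

lemma one_seq:
  fixes qa qc :: real
  assumes qc: "qc > 0"
  defines "f \<equiv> (\<lambda>k. qa - epsq k * qc)"
  shows "\<forall>k l. k < l \<longrightarrow> f k < f l" "f \<longlonglongrightarrow> qa"
proof -
  show "\<forall>k l. k < l \<longrightarrow> f k < f l"
    using epsq_facts(3) qc unfolding f_def by (auto intro: mult_strict_right_mono)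
  have "(\<lambda>k. qa - epsq k * qc) \<longlonglongrightarrow> qa - 0 * qc"
    by (intro tendsto_diff tendsto_mult tendsto_const epsq_lim)
  thus "f \<longlonglongrightarrow> qa" unfolding f_def by simp
qed

lemma compat_row:
  fixes qa qc qd M :: real
  assumes wf: "wf_entry v t"
    and hM: "qd \<noteq> 0 \<longrightarrow> M * \<bar>qd\<bar> > \<bar>qc\<bar>"
    and h1: "(t = One \<or> t = NegOne) \<longrightarrow> ereal qa = v \<and> qd = 0"
    and h0: "t = Zero \<longrightarrow> ereal qa = v \<and> qc = 0 \<and> qd = 0"
    and h2: "t = One \<longrightarrow> qc > 0" "t = NegOne \<longrightarrow> qc < 0"
    and h3: "t = Omega \<longrightarrow> qd > 0" "t = NegOmega \<longrightarrow> qd < 0"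
  shows "seq_compat (\<lambda>k. qa - epsq k * qc + real k * M * qd) v t"
proof (cases t)
  case Zero thus ?thesis using h0 by (simp add: seq_compat_def)
next
  case One
  hence "qd = 0" "v = ereal qa" "qc > 0" using h1 h2 by auto
  thus ?thesis using One one_seq[of qc qa] by (auto simp: seq_compat_def)
next
  case NegOne
  hence d: "qd = 0" "v = ereal qa" "qc < 0" using h1 h2 by auto
  hence "-qc > 0" by simp
  note o = one_seq[OF this, of "-qa"]
  have "\<forall>k l. k < l \<longrightarrow> qa - epsq l * qc < qa - epsq k * qc" using o(1) by auto
  moreover have "(\<lambda>k. qa - epsq k * qc) \<longlonglongrightarrow> qa"
    using tendsto_minus[OF o(2)] by simp
  ultimately show ?thesis using NegOne d by (auto simp: seq_compat_def)
next
  case Omega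
  hence d: "qd > 0" "v = PInfty" using h3 wf by (auto simp: wf_entry_def)
  hence "M * qd > \<bar>qc\<bar>" using hM by auto
  note o = omega_seq[OF d(1) this, of qa]
  show ?thesis using o Omega d by (simp add: seq_compat_def)
next
  case NegOmega
  hence d: "qd < 0" "v = MInfty" using h3 wf by (auto simp: wf_entry_def)
  hence d1: "-qd > 0" by simp
  have "M * (-qd) > \<bar>-qc\<bar>" using hM d by auto
  note o = omega_seq[OF d1 this, of "-qa"]
  have e: "(-qa - epsq k * (-qc) + real k * M * (-qd)) = - (qa - epsq k * qc + real k * M * qd)" for k
    by (simp add: algebra_simps)
  have "\<forall>k l. k < l \<longrightarrow> qa - epsq l * qc + real l * M * qd < qa - epsq k * qc + real k * M * qd"
    apply (intro allI impI)
    subgoal for k l using o(1)[rule_format, of k l] by linarith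
    done
  moreover have "filterlim (\<lambda>k. qa - epsq k * qc + real k * M * qd) at_bot sequentially"
    using o(2) unfolding e by (simp add: filterlim_uminus_at_bot)
  ultimately show ?thesis using NegOmega d by (simp add: seq_compat_def)
qed

lemma inj_seq:
  fixes qa qc qd M :: real
  assumes qc: "qc > 0" and M: "M \<ge> 0" and hM: "qd < 0 \<longrightarrow> M * \<bar>qd\<bar> > qc"
    and k: "k \<noteq> l"
  shows "qa - epsq k * qc + real k * M * qd \<noteq> qa - epsq l * qc + real l * M * qd"
proof -
  have main: "qa - epsq k * qc + real k * M * qd \<noteq> qa - epsq l * qc + real l * M * qd"
    if kl: "k < l" for k l
  proof -
    have diff: "(qa - epsq l * qc + real l * M * qd) - (qa - epsq k * qc + real k * M * qd)
       = qc * (epsq k - epsq l) + (real l - real k) * (M * qd)"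
      by (simp add: algebra_simps)
    have ek: "0 < epsq k - epsq l" "epsq k - epsq l \<le> 1"
      using epsq_facts[of k] epsq_facts[of l] epsq_facts(3)[OF kl] by auto
    have lk: "1 \<le> real l - real k" using kl by simp
    show ?thesis
    proof (cases "qd \<ge> 0")
      case True
      have "qc * (epsq k - epsq l) > 0" using qc ek by simp
      moreover have "(real l - real k) * (M * qd) \<ge> 0" using True M lk by simp
      ultimately show ?thesis using diff by linarith
    next
      case False
      have "(-qc) * (epsq k - epsq l) + (real l - real k) * (M * (-qd)) > 0"
        apply (rule key_ineq) using ek lk hM False qc by auto
      thus ?thesis using diff by (simp add: algebra_simps)
    qed
  qed
  show ?thesis using k main[of k l] main[of l k] by (cases "k < l") auto
qed

lemma M_bound:
  fixes b g M :: real
  assumes "g \<noteq> 0" "1 + \<bar>b\<bar> / \<bar>g\<bar> \<le> M"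
  shows "M * \<bar>g\<bar> > \<bar>b\<bar>"
proof -
  have "(1 + \<bar>b\<bar> / \<bar>g\<bar>) * \<bar>g\<bar> \<le> M * \<bar>g\<bar>" using assms by (intro mult_right_mono) auto
  moreover have "(1 + \<bar>b\<bar> / \<bar>g\<bar>) * \<bar>g\<bar> = \<bar>g\<bar> + \<bar>b\<bar>" using assms by (simp add: field_simps)
  ultimately show ?thesis using assms by linarith
qed



lemma backward:
  fixes n m :: nat
    and r s :: "nat \<Rightarrow> real^'d"
    and u v :: "nat \<Rightarrow> real^'d" and w :: "nat \<Rightarrow> real^'e" and dd :: "nat \<Rightarrow> real"
    and c :: "real^'e"
    and rho sig :: "nat \<Rightarrow> ereal" and trho tsig :: "nat \<Rightarrow> ptype"
    and a dc dinf :: "real^'d"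
  assumes wf: "\<forall>i\<in>{1..n}. wf_entry (rho i) (trho i) \<and> wf_entry (sig i) (tsig i)"
    and dc0: "dc \<noteq> 0"
    and R: "\<forall>i\<in>{1..n}.
           ((trho i = One \<or> trho i = NegOne) \<longrightarrow> ereal (r i \<bullet> a) = rho i \<and> r i \<bullet> dinf = 0) \<and>
           ((tsig i = One \<or> tsig i = NegOne) \<longrightarrow> ereal (s i \<bullet> a) = sig i \<and> s i \<bullet> dinf = 0) \<and>
           (trho i = Zero \<longrightarrow> ereal (r i \<bullet> a) = rho i \<and> r i \<bullet> dc = 0 \<and> r i \<bullet> dinf = 0) \<and>
           (tsig i = Zero \<longrightarrow> ereal (s i \<bullet> a) = sig i \<and> s i \<bullet> dc = 0 \<and> s i \<bullet> dinf = 0) \<and>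
           (trho i = One \<longrightarrow> r i \<bullet> dc > 0) \<and> (trho i = NegOne \<longrightarrow> r i \<bullet> dc < 0) \<and>
           (tsig i = One \<longrightarrow> s i \<bullet> dc > 0) \<and> (tsig i = NegOne \<longrightarrow> s i \<bullet> dc < 0) \<and>
           (trho i = Omega \<longrightarrow> r i \<bullet> dinf > 0) \<and> (trho i = NegOmega \<longrightarrow> r i \<bullet> dinf < 0) \<and>
           (tsig i = Omega \<longrightarrow> s i \<bullet> dinf > 0) \<and> (tsig i = NegOmega \<longrightarrow> s i \<bullet> dinf < 0)"
    and E: "\<forall>j\<in>{1..m}.
           u j \<bullet> dc = 0 \<and> u j \<bullet> dinf = 0 \<and> v j \<bullet> dc = 0 \<and> v j \<bullet> dinf = 0 \<and>
           (u j - v j) \<bullet> a = w j \<bullet> c + dd j"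
  shows "\<exists>A :: nat \<Rightarrow> real^'d. compatible n r s rho sig trho tsig A
                                \<and> eq_constraints m u v w dd c A"
proof -
  define S where "S = (\<Sum>i\<in>{1..n}. \<bar>r i \<bullet> dc\<bar> / \<bar>r i \<bullet> dinf\<bar> + \<bar>s i \<bullet> dc\<bar> / \<bar>s i \<bullet> dinf\<bar>)"
  define M where "M = 1 + S + \<bar>dc \<bullet> dc\<bar> / \<bar>dc \<bullet> dinf\<bar>"
  have S0: "S \<ge> 0" unfolding S_def by (intro sum_nonneg) auto
  have M0: "M \<ge> 0" unfolding M_def using S0 by simp
  define A where "A k = a - epsq k *\<^sub>R dc + (real k * M) *\<^sub>R dinf" for k
  have inA: "q \<bullet> A k = q \<bullet> a - epsq k * (q \<bullet> dc) + real k * M * (q \<bullet> dinf)" for q k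
    unfolding A_def by (simp add: inner_add_right inner_diff_right)
  have Mr: "r i \<bullet> dinf \<noteq> 0 \<longrightarrow> M * \<bar>r i \<bullet> dinf\<bar> > \<bar>r i \<bullet> dc\<bar>"
    and Ms: "s i \<bullet> dinf \<noteq> 0 \<longrightarrow> M * \<bar>s i \<bullet> dinf\<bar> > \<bar>s i \<bullet> dc\<bar>" if i: "i \<in> {1..n}" for i
  proof -
    have le: "\<bar>r i \<bullet> dc\<bar> / \<bar>r i \<bullet> dinf\<bar> + \<bar>s i \<bullet> dc\<bar> / \<bar>s i \<bullet> dinf\<bar> \<le> S"
      unfolding S_def using i
      by (rule member_le_sum[where f="\<lambda>i. \<bar>r i \<bullet> dc\<bar> / \<bar>r i \<bullet> dinf\<bar> + \<bar>s i \<bullet> dc\<bar> / \<bar>s i \<bullet> dinf\<bar>"]) auto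
    have x: "\<bar>dc \<bullet> dc\<bar> / \<bar>dc \<bullet> dinf\<bar> \<ge> 0" by simp
    have "1 + \<bar>r i \<bullet> dc\<bar> / \<bar>r i \<bullet> dinf\<bar> \<le> M"
      using le x unfolding M_def
      by (smt (verit) divide_nonneg_nonneg abs_ge_zero)
    thus "r i \<bullet> dinf \<noteq> 0 \<longrightarrow> M * \<bar>r i \<bullet> dinf\<bar> > \<bar>r i \<bullet> dc\<bar>" using M_bound by blast
    have "1 + \<bar>s i \<bullet> dc\<bar> / \<bar>s i \<bullet> dinf\<bar> \<le> M"
      using le x unfolding M_def
      by (smt (verit) divide_nonneg_nonneg abs_ge_zero)
    thus "s i \<bullet> dinf \<noteq> 0 \<longrightarrow> M * \<bar>s i \<bullet> dinf\<bar> > \<bar>s i \<bullet> dc\<bar>" using M_bound by blast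
  qed
  have injA: "inj A"
  proof (rule injI, rule ccontr)
    fix k l :: nat assume eq: "A k = A l" and kl: "k \<noteq> l"
    have dcpos: "dc \<bullet> dc > 0" using dc0 by simp
    have hM: "dc \<bullet> dinf < 0 \<longrightarrow> M * \<bar>dc \<bullet> dinf\<bar> > dc \<bullet> dc"
    proof
      assume neg: "dc \<bullet> dinf < 0"
      have "1 + \<bar>dc \<bullet> dc\<bar> / \<bar>dc \<bullet> dinf\<bar> \<le> M" unfolding M_def using S0 by simp
      thus "M * \<bar>dc \<bullet> dinf\<bar> > dc \<bullet> dc" using M_bound[of "dc \<bullet> dinf" "dc \<bullet> dc" M] neg by simp
    qed
    have "dc \<bullet> A k \<noteq> dc \<bullet> A l"
      unfolding inA using inj_seq[OF dcpos M0 hM kl] by simp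
    thus False using eq by simp
  qed
  have rows: "seq_compat (\<lambda>k. q \<bullet> A k) vv t"
    if "wf_entry vv t" "q \<bullet> dinf \<noteq> 0 \<longrightarrow> M * \<bar>q \<bullet> dinf\<bar> > \<bar>q \<bullet> dc\<bar>"
       "(t = One \<or> t = NegOne) \<longrightarrow> ereal (q \<bullet> a) = vv \<and> q \<bullet> dinf = 0"
       "t = Zero \<longrightarrow> ereal (q \<bullet> a) = vv \<and> q \<bullet> dc = 0 \<and> q \<bullet> dinf = 0"
       "t = One \<longrightarrow> q \<bullet> dc > 0" "t = NegOne \<longrightarrow> q \<bullet> dc < 0"
       "t = Omega \<longrightarrow> q \<bullet> dinf > 0" "t = NegOmega \<longrightarrow> q \<bullet> dinf < 0"
     for q vv t
    unfolding inA by (rule compat_row[OF that])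
  have "compatible n r s rho sig trho tsig A"
    unfolding compatible_def
  proof (intro conjI injA ballI)
    fix i assume i: "i \<in> {1..n}"
    show "seq_compat (\<lambda>k. r i \<bullet> A k) (rho i) (trho i)"
      by (rule rows) (use wf R Mr[OF i] i in auto)
    show "seq_compat (\<lambda>k. s i \<bullet> A k) (sig i) (tsig i)"
      by (rule rows) (use wf R Ms[OF i] i in auto)
  qed
  moreover have "eq_constraints m u v w dd c A"
    unfolding eq_constraints_def
  proof (intro ballI allI impI)
    fix j k l :: nat assume j: "j \<in> {1..m}" and "k < l"
    have "u j \<bullet> A k = u j \<bullet> a" "v j \<bullet> A l = v j \<bullet> a" using E j unfolding inA by auto
    moreover have "(u j - v j) \<bullet> a = w j \<bullet> c + dd j" using E j by auto
    ultimately show "u j \<bullet> A k = v j \<bullet> A l + w j \<bullet> c + dd j" by (simp add: inner_diff_left)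
  qed
  ultimately show ?thesis by blast
qed



lemma forward:
  fixes n m :: nat
    and r s :: "nat \<Rightarrow> real^'d"
    and u v :: "nat \<Rightarrow> real^'d" and w :: "nat \<Rightarrow> real^'e" and dd :: "nat \<Rightarrow> real"
    and c :: "real^'e"
    and rho sig :: "nat \<Rightarrow> ereal" and trho tsig :: "nat \<Rightarrow> ptype"
    and a :: "nat \<Rightarrow> real^'d"
  assumes C: "compatible n r s rho sig trho tsig a" and E: "eq_constraints m u v w dd c a"
  shows "\<exists>a dc dinf :: real^'d. dc \<noteq> 0 \<and>
        (\<forall>i\<in>{1..n}.
           ((trho i = One \<or> trho i = NegOne) \<longrightarrow> ereal (r i \<bullet> a) = rho i \<and> r i \<bullet> dinf = 0) \<and>
           ((tsig i = One \<or> tsig i = NegOne) \<longrightarrow> ereal (s i \<bullet> a) = sig i \<and> s i \<bullet> dinf = 0) \<and>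
           (trho i = Zero \<longrightarrow> ereal (r i \<bullet> a) = rho i \<and> r i \<bullet> dc = 0 \<and> r i \<bullet> dinf = 0) \<and>
           (tsig i = Zero \<longrightarrow> ereal (s i \<bullet> a) = sig i \<and> s i \<bullet> dc = 0 \<and> s i \<bullet> dinf = 0) \<and>
           (trho i = One \<longrightarrow> r i \<bullet> dc > 0) \<and> (trho i = NegOne \<longrightarrow> r i \<bullet> dc < 0) \<and>
           (tsig i = One \<longrightarrow> s i \<bullet> dc > 0) \<and> (tsig i = NegOne \<longrightarrow> s i \<bullet> dc < 0) \<and>
           (trho i = Omega \<longrightarrow> r i \<bullet> dinf > 0) \<and> (trho i = NegOmega \<longrightarrow> r i \<bullet> dinf < 0) \<and>
           (tsig i = Omega \<longrightarrow> s i \<bullet> dinf > 0) \<and> (tsig i = NegOmega \<longrightarrow> s i \<bullet> dinf < 0)) \<and>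
        (\<forall>j\<in>{1..m}.
           u j \<bullet> dc = 0 \<and> u j \<bullet> dinf = 0 \<and> v j \<bullet> dc = 0 \<and> v j \<bullet> dinf = 0 \<and>
           (u j - v j) \<bullet> a = w j \<bullet> c + dd j)"
proof -
  have inja: "inj a" using C by (simp add: compatible_def)
  define Rw where "Rw = {1..n} \<times> (UNIV :: bool set)"
  define q where "q \<rho> = (if snd \<rho> then r (fst \<rho>) else s (fst \<rho>))" for \<rho>
  define val where "val \<rho> = (if snd \<rho> then rho (fst \<rho>) else sig (fst \<rho>))" for \<rho>
  define ty where "ty \<rho> = (if snd \<rho> then trho (fst \<rho>) else tsig (fst \<rho>))" for \<rho>
  have finRw: "finite Rw" unfolding Rw_def by simp
  have sc: "seq_compat (\<lambda>k. q \<rho> \<bullet> a k) (val \<rho>) (ty \<rho>)" if "\<rho> \<in> Rw" for \<rho>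
    using C that unfolding compatible_def Rw_def q_def val_def ty_def by (cases "snd \<rho>") auto
  have Eq: "u j \<bullet> a k = v j \<bullet> a l + w j \<bullet> c + dd j" if "j \<in> {1..m}" "k < l" for j k l
    using E that unfolding eq_constraints_def by blast
  have uconst: "u j \<bullet> a k = u j \<bullet> a 0" if "j \<in> {1..m}" for j k
    using Eq[OF that, of k "Suc k"] Eq[OF that, of 0 "Suc k"] by simp
  have vconst: "v j \<bullet> a l = v j \<bullet> a 1" if "j \<in> {1..m}" "l \<ge> 1" for j l
    using Eq[OF that(1), of 0 l] Eq[OF that(1), of 0 1] that(2) by simp
  have zero_const: "q \<rho> \<bullet> a k = q \<rho> \<bullet> a 1" "ereal (q \<rho> \<bullet> a 1) = val \<rho>"
    if "\<rho> \<in> Rw" "ty \<rho> = Zero" for \<rho> k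
  proof -
    have h: "\<forall>k. ereal (q \<rho> \<bullet> a k) = val \<rho>" using sc[OF that(1)] that(2) by (simp add: seq_compat_def)
    have "ereal (q \<rho> \<bullet> a k) = ereal (q \<rho> \<bullet> a 1)" using h by simp
    thus "q \<rho> \<bullet> a k = q \<rho> \<bullet> a 1" by (simp only: ereal.inject)
    show "ereal (q \<rho> \<bullet> a 1) = val \<rho>" using h by blast
  qed
  define L where "L = {x::real^'d. (\<forall>j\<in>{1..m}. u j \<bullet> x = 0 \<and> v j \<bullet> x = 0) \<and>
                                   (\<forall>\<rho>\<in>Rw. ty \<rho> = Zero \<longrightarrow> q \<rho> \<bullet> x = 0)}"
  have subL: "subspace L" unfolding subspace_def
  proof (intro conjI ballI allI)
    show "0 \<in> L" unfolding L_def by simp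
  next
    fix x y assume "x \<in> L" "y \<in> L"
    thus "x + y \<in> L" unfolding L_def by (simp add: inner_add_right)
  next
    fix t :: real and x assume "x \<in> L"
    thus "t *\<^sub>R x \<in> L" unfolding L_def by simp
  qed
  define xs where "xs k = a (Suc k) - a 1" for k
  have xsL: "xs k \<in> L" for k
  proof -
    have "\<forall>j\<in>{1..m}. u j \<bullet> xs k = 0 \<and> v j \<bullet> xs k = 0"
      unfolding xs_def using uconst[of _ "Suc k"] uconst[of _ 1] vconst[of _ "Suc k"] by (simp add: inner_diff_right)
    moreover have "\<forall>\<rho>\<in>Rw. ty \<rho> = Zero \<longrightarrow> q \<rho> \<bullet> xs k = 0"
      unfolding xs_def using zero_const(1)[of _ "Suc k"] by (simp add: inner_diff_right)
    ultimately show ?thesis unfolding L_def by blast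
  qed
  define J where "J = {\<rho>\<in>Rw. ty \<rho> = One \<or> ty \<rho> = NegOne}"
  define Om where "Om = {\<rho>\<in>Rw. ty \<rho> = Omega \<or> ty \<rho> = NegOmega}"
  define \<gamma> where "\<gamma> \<rho> = real_of_ereal (val \<rho>) - q \<rho> \<bullet> a 1" for \<rho>
  define p where "p \<rho> = (if ty \<rho> = Omega then q \<rho> else - q \<rho>)" for \<rho>
  have finJ: "finite J" "finite Om" using finRw unfolding J_def Om_def by auto
  have limJ: "(\<lambda>k. q \<rho> \<bullet> xs k) \<longlonglongrightarrow> \<gamma> \<rho>" if "\<rho> \<in> J" for \<rho>
  proof -
    have "\<exists>r'. val \<rho> = ereal r' \<and> (\<lambda>k. q \<rho> \<bullet> a k) \<longlonglongrightarrow> r'"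
      using sc[of \<rho>] that unfolding J_def seq_compat_def by (auto split: ptype.splits)
    then obtain r' where r': "val \<rho> = ereal r'" "(\<lambda>k. q \<rho> \<bullet> a k) \<longlonglongrightarrow> r'" by blast
    have "(\<lambda>k. q \<rho> \<bullet> a (Suc k) - q \<rho> \<bullet> a 1) \<longlonglongrightarrow> r' - q \<rho> \<bullet> a 1"
      by (intro tendsto_diff tendsto_const) (use r'(2) LIMSEQ_Suc in blast)
    thus ?thesis unfolding xs_def \<gamma>_def using r'(1) by (simp add: inner_diff_right)
  qed
  have limOm: "filterlim (\<lambda>k. p \<rho> \<bullet> xs k) at_top sequentially" if "\<rho> \<in> Om" for \<rho>
  proof -
    have "filterlim (\<lambda>k. p \<rho> \<bullet> a k) at_top sequentially"
      using sc[of \<rho>] that unfolding Om_def seq_compat_def p_def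
      by (auto split: ptype.splits simp: filterlim_uminus_at_bot)
    hence "filterlim (\<lambda>k. p \<rho> \<bullet> a (Suc k)) at_top sequentially"
      by (rule filterlim_compose[OF _ filterlim_Suc])
    hence "filterlim (\<lambda>k. (- (p \<rho> \<bullet> a 1)) + p \<rho> \<bullet> a (Suc k)) at_top sequentially"
      by (rule filterlim_tendsto_add_at_top[OF tendsto_const])
    thus ?thesis unfolding xs_def by (simp add: inner_diff_right)
  qed
  obtain z where zL: "z \<in> L" and zJ: "\<forall>\<rho>\<in>J. q \<rho> \<bullet> z = \<gamma> \<rho>"
    using solve_limit[of L J xs q \<gamma>] subL finJ xsL limJ by blast
  obtain y where yL: "y \<in> L" and yJ: "\<forall>\<rho>\<in>J. q \<rho> \<bullet> y = 0" and yO: "\<forall>\<rho>\<in>Om. p \<rho> \<bullet> y > 0"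
    using solve_dir[of L J Om xs q \<gamma> p] subL finJ xsL limJ limOm by blast
  define a' where "a' = a 1 + z"
  define dc where "dc = a 2 - a 1"
  have dc0: "dc \<noteq> 0" unfolding dc_def using inja by (auto dest: injD)
  have row: "((ty \<rho> = One \<or> ty \<rho> = NegOne) \<longrightarrow> ereal (q \<rho> \<bullet> a') = val \<rho> \<and> q \<rho> \<bullet> y = 0) \<and>
             (ty \<rho> = Zero \<longrightarrow> ereal (q \<rho> \<bullet> a') = val \<rho> \<and> q \<rho> \<bullet> dc = 0 \<and> q \<rho> \<bullet> y = 0) \<and>
             (ty \<rho> = One \<longrightarrow> q \<rho> \<bullet> dc > 0) \<and> (ty \<rho> = NegOne \<longrightarrow> q \<rho> \<bullet> dc < 0) \<and>
             (ty \<rho> = Omega \<longrightarrow> q \<rho> \<bullet> y > 0) \<and> (ty \<rho> = NegOmega \<longrightarrow> q \<rho> \<bullet> y < 0)"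
    if R: "\<rho> \<in> Rw" for \<rho>
  proof (cases "ty \<rho>")
    case Zero
    have "q \<rho> \<bullet> z = 0" "q \<rho> \<bullet> y = 0" using zL yL R Zero unfolding L_def by auto
    moreover have "q \<rho> \<bullet> a 2 = q \<rho> \<bullet> a 1" using zero_const(1)[OF R Zero, of 2] by simp
    ultimately show ?thesis using zero_const(2)[OF R Zero] Zero
      unfolding a'_def dc_def by (simp add: inner_add_right inner_diff_right)
  next
    case One
    hence J: "\<rho> \<in> J" using R unfolding J_def by auto
    obtain r' where "val \<rho> = ereal r'" and inc: "\<forall>k l. k < l \<longrightarrow> q \<rho> \<bullet> a k < q \<rho> \<bullet> a l"
      using sc[OF R] One unfolding seq_compat_def by auto
    moreover have "q \<rho> \<bullet> a 1 < q \<rho> \<bullet> a 2" using inc by simp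
    ultimately show ?thesis using zJ yJ J One unfolding a'_def dc_def \<gamma>_def
      by (simp add: inner_add_right inner_diff_right)
  next
    case NegOne
    hence J: "\<rho> \<in> J" using R unfolding J_def by auto
    obtain r' where "val \<rho> = ereal r'" and inc: "\<forall>k l. k < l \<longrightarrow> q \<rho> \<bullet> a l < q \<rho> \<bullet> a k"
      using sc[OF R] NegOne unfolding seq_compat_def by auto
    moreover have "q \<rho> \<bullet> a 2 < q \<rho> \<bullet> a 1" using inc by simp
    ultimately show ?thesis using zJ yJ J NegOne unfolding a'_def dc_def \<gamma>_def
      by (simp add: inner_add_right inner_diff_right)
  next
    case Omega
    hence "\<rho> \<in> Om" using R unfolding Om_def by auto
    thus ?thesis using yO Omega unfolding p_def by auto
  next
    case NegOmega
    hence "\<rho> \<in> Om" using R unfolding Om_def by auto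
    thus ?thesis using yO NegOmega unfolding p_def by auto
  qed
  have rowT: "\<And>i. i \<in> {1..n} \<Longrightarrow> (i, True) \<in> Rw" and rowF: "\<And>i. i \<in> {1..n} \<Longrightarrow> (i, False) \<in> Rw"
    unfolding Rw_def by auto
  have part1: "\<forall>i\<in>{1..n}.
           ((trho i = One \<or> trho i = NegOne) \<longrightarrow> ereal (r i \<bullet> a') = rho i \<and> r i \<bullet> y = 0) \<and>
           ((tsig i = One \<or> tsig i = NegOne) \<longrightarrow> ereal (s i \<bullet> a') = sig i \<and> s i \<bullet> y = 0) \<and>
           (trho i = Zero \<longrightarrow> ereal (r i \<bullet> a') = rho i \<and> r i \<bullet> dc = 0 \<and> r i \<bullet> y = 0) \<and>
           (tsig i = Zero \<longrightarrow> ereal (s i \<bullet> a') = sig i \<and> s i \<bullet> dc = 0 \<and> s i \<bullet> y = 0) \<and>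
           (trho i = One \<longrightarrow> r i \<bullet> dc > 0) \<and> (trho i = NegOne \<longrightarrow> r i \<bullet> dc < 0) \<and>
           (tsig i = One \<longrightarrow> s i \<bullet> dc > 0) \<and> (tsig i = NegOne \<longrightarrow> s i \<bullet> dc < 0) \<and>
           (trho i = Omega \<longrightarrow> r i \<bullet> y > 0) \<and> (trho i = NegOmega \<longrightarrow> r i \<bullet> y < 0) \<and>
           (tsig i = Omega \<longrightarrow> s i \<bullet> y > 0) \<and> (tsig i = NegOmega \<longrightarrow> s i \<bullet> y < 0)"
  proof
    fix i assume i: "i \<in> {1..n}"
    show "((trho i = One \<or> trho i = NegOne) \<longrightarrow> ereal (r i \<bullet> a') = rho i \<and> r i \<bullet> y = 0) \<and>
           ((tsig i = One \<or> tsig i = NegOne) \<longrightarrow> ereal (s i \<bullet> a') = sig i \<and> s i \<bullet> y = 0) \<and>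
           (trho i = Zero \<longrightarrow> ereal (r i \<bullet> a') = rho i \<and> r i \<bullet> dc = 0 \<and> r i \<bullet> y = 0) \<and>
           (tsig i = Zero \<longrightarrow> ereal (s i \<bullet> a') = sig i \<and> s i \<bullet> dc = 0 \<and> s i \<bullet> y = 0) \<and>
           (trho i = One \<longrightarrow> r i \<bullet> dc > 0) \<and> (trho i = NegOne \<longrightarrow> r i \<bullet> dc < 0) \<and>
           (tsig i = One \<longrightarrow> s i \<bullet> dc > 0) \<and> (tsig i = NegOne \<longrightarrow> s i \<bullet> dc < 0) \<and>
           (trho i = Omega \<longrightarrow> r i \<bullet> y > 0) \<and> (trho i = NegOmega \<longrightarrow> r i \<bullet> y < 0) \<and>
           (tsig i = Omega \<longrightarrow> s i \<bullet> y > 0) \<and> (tsig i = NegOmega \<longrightarrow> s i \<bullet> y < 0)"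
      using row[OF rowT[OF i]] row[OF rowF[OF i]] unfolding q_def val_def ty_def by simp
  qed
  have part2: "\<forall>j\<in>{1..m}.
           u j \<bullet> dc = 0 \<and> u j \<bullet> y = 0 \<and> v j \<bullet> dc = 0 \<and> v j \<bullet> y = 0 \<and>
           (u j - v j) \<bullet> a' = w j \<bullet> c + dd j"
  proof
    fix j assume j: "j \<in> {1..m}"
    have "u j \<bullet> z = 0" "v j \<bullet> z = 0" "u j \<bullet> y = 0" "v j \<bullet> y = 0"
      using zL yL j unfolding L_def by auto
    moreover have "u j \<bullet> a 2 = u j \<bullet> a 1" using uconst[OF j, of 2] uconst[OF j, of 1] by simp
    moreover have "v j \<bullet> a 2 = v j \<bullet> a 1" using vconst[OF j, of 2] by simp
    moreover have "u j \<bullet> a 1 = v j \<bullet> a 2 + w j \<bullet> c + dd j" using Eq[OF j, of 1 2] by simp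
    ultimately show "u j \<bullet> dc = 0 \<and> u j \<bullet> y = 0 \<and> v j \<bullet> dc = 0 \<and> v j \<bullet> y = 0 \<and>
           (u j - v j) \<bullet> a' = w j \<bullet> c + dd j"
      unfolding a'_def dc_def by (simp add: inner_add_right inner_diff_right inner_diff_left)
  qed
  show ?thesis using dc0 part1 part2 by blast
qed

theorem mainTheorem13:
  fixes n m :: nat
    and r s :: "nat \<Rightarrow> real^'d" and t :: "nat \<Rightarrow> real^'e" and h :: "nat \<Rightarrow> real"
    and u v :: "nat \<Rightarrow> real^'d" and w :: "nat \<Rightarrow> real^'e" and dd :: "nat \<Rightarrow> real"
    and c :: "real^'e"
    and rho sig :: "nat \<Rightarrow> ereal" and trho tsig :: "nat \<Rightarrow> ptype"
  assumes "\<forall>i\<in>{1..n}. rat_vec (r i) \<and> rat_vec (s i) \<and> rat_vec (t i) \<and> h i \<in> \<rat>"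
    and "\<forall>j\<in>{1..m}. rat_vec (u j) \<and> rat_vec (v j) \<and> rat_vec (w j) \<and> dd j \<in> \<rat>"
    and "\<forall>i\<in>{1..n}. wf_entry (rho i) (trho i) \<and> wf_entry (sig i) (tsig i)"
  shows "(\<exists>a :: nat \<Rightarrow> real^'d. compatible n r s rho sig trho tsig a
                                \<and> eq_constraints m u v w dd c a)
     \<longleftrightarrow>
     (\<exists>a dc dinf :: real^'d. dc \<noteq> 0 \<and>
        (\<forall>i\<in>{1..n}.
           ((trho i = One \<or> trho i = NegOne) \<longrightarrow> ereal (r i \<bullet> a) = rho i \<and> r i \<bullet> dinf = 0) \<and>
           ((tsig i = One \<or> tsig i = NegOne) \<longrightarrow> ereal (s i \<bullet> a) = sig i \<and> s i \<bullet> dinf = 0) \<and>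
           (trho i = Zero \<longrightarrow> ereal (r i \<bullet> a) = rho i \<and> r i \<bullet> dc = 0 \<and> r i \<bullet> dinf = 0) \<and>
           (tsig i = Zero \<longrightarrow> ereal (s i \<bullet> a) = sig i \<and> s i \<bullet> dc = 0 \<and> s i \<bullet> dinf = 0) \<and>
           (trho i = One \<longrightarrow> r i \<bullet> dc > 0) \<and> (trho i = NegOne \<longrightarrow> r i \<bullet> dc < 0) \<and>
           (tsig i = One \<longrightarrow> s i \<bullet> dc > 0) \<and> (tsig i = NegOne \<longrightarrow> s i \<bullet> dc < 0) \<and>
           (trho i = Omega \<longrightarrow> r i \<bullet> dinf > 0) \<and> (trho i = NegOmega \<longrightarrow> r i \<bullet> dinf < 0) \<and>
           (tsig i = Omega \<longrightarrow> s i \<bullet> dinf > 0) \<and> (tsig i = NegOmega \<longrightarrow> s i \<bullet> dinf < 0)) \<and>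
        (\<forall>j\<in>{1..m}.
           u j \<bullet> dc = 0 \<and> u j \<bullet> dinf = 0 \<and> v j \<bullet> dc = 0 \<and> v j \<bullet> dinf = 0 \<and>
           (u j - v j) \<bullet> a = w j \<bullet> c + dd j))"
  apply (rule iffI)
   apply (elim exE conjE)
   apply (rule forward)
    apply assumption+
  apply (elim exE conjE)
  apply (rule backward[OF assms(3)])
    apply assumption+
  done

end
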